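(* Let $q > p+1$ and let $(a_0,\dots,a_q)$ and $(b_0,\dots,b_p)$ be appropriate sequences. Let $u, v$ be non-negative integers with $u < v$ and $u + v \leq q - p$. Then $$\sum_{0 \leq i \leq p} a_{i+u} b_i \leq \sum_{0 \leq i \leq p} a_{i+v} b_i.$$
   Context: A real sequence $(c_0,c_1,\dots,c_m)$ is called appropriate if $c_i = c_{m-i}$ for $0 \le i < m/2$ and $0 \leq c_0 \leq c_1 \leq \dots \leq c_{\lfloor m/2\rfloor}$. *)

theory Defs
  imports Complex_Main
begin

text \<open>A real sequence (c_0,...,c_m), represented as a function nat => real
  of which only the values at 0..m matter, is appropriate if it is symmetric
  (c_i = c_(m-i) for 0 <= i < m/2) and 0 <= c_0 <= c_1 <= ... <= c_(floor(m/2)).\<close>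
definition appropriate :: "nat \<Rightarrow> (nat \<Rightarrow> real) \<Rightarrow> bool" where
  "appropriate m c \<longleftrightarrow>
     (\<forall>i. 2 * i < m \<longrightarrow> c i = c (m - i)) \<and>
     0 \<le> c 0 \<and>
     (\<forall>i j. i \<le> j \<and> j \<le> m div 2 \<longrightarrow> c i \<le> c j)"

end

theory Submission
  imports Defs
begin

lemma app_sym:
  assumes "appropriate q a" "x \<le> q"
  shows "a (q - x) = a x"
proof -
  have S: "\<forall>i. 2 * i < q \<longrightarrow> a i = a (q - i)" using assms(1) unfolding appropriate_def by blast
  consider "2*x < q" | "2*x = q" | "2*x > q" by linarith
  then show ?thesis
  proof cases
    case 1 then show ?thesis using S by metis
  next
    case 2 then have "q - x = x" by linarith then show ?thesis by simp
  next
    case 3 then have "2*(q-x) < q" using assms(2) by linarith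
    then have "a (q-x) = a (q - (q-x))" using S by blast
    then show ?thesis using assms(2) by simp
  qed
qed

lemma app_cmp:
  assumes "appropriate q a" "x \<le> q" "y \<le> q" "min x (q-x) \<le> min y (q-y)"
  shows "a x \<le> a y"
proof -
  have M: "\<forall>i j. i \<le> j \<and> j \<le> q div 2 \<longrightarrow> a i \<le> a j" using assms(1) unfolding appropriate_def by blast
  have ex: "a x = a (min x (q-x))" using app_sym[OF assms(1) assms(2)] by (simp add: min_def)
  have ey: "a y = a (min y (q-y))" using app_sym[OF assms(1) assms(3)] by (simp add: min_def)
  have "min y (q-y) \<le> q div 2" by linarith
  then have "a (min x (q-x)) \<le> a (min y (q-y))" using M assms(4) by blast
  then show ?thesis using ex ey by simp
qed

lemma win_step:
  assumes "appropriate q a" "2*r + L \<le> q"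
  shows "(\<Sum>j<L. a (r+j)) \<le> (\<Sum>j<L. a (Suc r + j))"
proof (cases L)
  case 0 then show ?thesis by simp
next
  case (Suc n)
  have "min r (q-r) \<le> min (r+L) (q-(r+L))" using assms(2) by simp
  then have "a r \<le> a (r + L)" using app_cmp[OF assms(1), of r "r+L"] assms(2) by simp
  have e1: "(\<Sum>j<L. a (r+j)) = a r + (\<Sum>j<n. a (Suc r + j))"
    using Suc by (simp only: sum.lessThan_Suc_shift) simp
  have e2: "(\<Sum>j<L. a (Suc r+j)) = (\<Sum>j<n. a (Suc r + j)) + a (r + L)"
    using Suc by (simp only: sum.lessThan_Suc) simp
  show ?thesis unfolding e1 e2 using \<open>a r \<le> a (r + L)\<close> by simp
qed

lemma win_mono:
  assumes "appropriate q a" "2*(s+d) + L \<le> q + 2"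
  shows "(\<Sum>j<L. a (s+j)) \<le> (\<Sum>j<L. a ((s+d)+j))"
  using assms(2)
proof (induction d)
  case 0 then show ?case by simp
next
  case (Suc d)
  have "(\<Sum>j<L. a ((s+d)+j)) \<le> (\<Sum>j<L. a (Suc (s+d) + j))"
    using win_step[OF assms(1), of "s+d" L] Suc.prems by simp
  with Suc show ?case by simp
qed

lemma win_refl:
  assumes "appropriate q a" "r + L \<le> q + 1"
  shows "(\<Sum>j<L. a (r+j)) = (\<Sum>j<L. a ((q+1-L-r)+j))"
proof -
  have "(\<Sum>j<L. a ((q+1-L-r)+j)) = (\<Sum>j<L. a ((q+1-L-r)+(L - Suc j)))"
    by (rule sum.nat_diff_reindex[symmetric])
  also have "\<dots> = (\<Sum>j<L. a (r+j))"
  proof (rule sum.cong)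
    fix j assume "j \<in> {..<L}"
    then have j: "j < L" by simp
    have "(q+1-L-r)+(L - Suc j) = q - (r+j)" using j assms(2) by linarith
    then show "a ((q+1-L-r)+(L - Suc j)) = a (r+j)"
      using app_sym[OF assms(1), of "r+j"] j assms(2) by simp
  qed simp
  finally show ?thesis by simp
qed

lemma win:
  assumes "appropriate q a" "s \<le> t" "s + t + L \<le> q + 1"
  shows "(\<Sum>j<L. a (s+j)) \<le> (\<Sum>j<L. a (t+j))"
proof (cases "2*t + L \<le> q + 2")
  case True
  then show ?thesis using win_mono[OF assms(1), of s "t-s" L] assms(2) by simp
next
  case False
  define t' where "t' = q+1-L-t"
  have "s \<le> t'" "2*t' + L \<le> q + 2" using assms False unfolding t'_def by linarith+
  then have "(\<Sum>j<L. a (s+j)) \<le> (\<Sum>j<L. a (t'+j))"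
    using win_mono[OF assms(1), of s "t'-s" L] by simp
  also have "\<dots> = (\<Sum>j<L. a (t+j))"
    using win_refl[OF assms(1), of t L] assms unfolding t'_def by simp
  finally show ?thesis .
qed

definition dl :: "(nat \<Rightarrow> real) \<Rightarrow> nat \<Rightarrow> real" where
  "dl b k = b k - (if k = 0 then 0 else b (k-1))"

lemma dl_tel: "(\<Sum>k\<le>m. dl b k) = b m"
  by (induction m) (auto simp: dl_def)

lemma dl_nonneg:
  assumes "appropriate p b" "k \<le> p div 2"
  shows "dl b k \<ge> 0"
proof (cases k)
  case 0 then show ?thesis using assms unfolding appropriate_def dl_def by auto
next
  case (Suc n)
  have M: "\<forall>i j. i \<le> j \<and> j \<le> p div 2 \<longrightarrow> b i \<le> b j" using assms(1) unfolding appropriate_def by blast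
  have "b n \<le> b k" using M assms(2) Suc by simp
  then show ?thesis using Suc unfolding dl_def by simp
qed

lemma decomp:
  assumes "appropriate p b"
  shows "(\<Sum>i\<le>p. b i * c i) = (\<Sum>k\<le>p div 2. dl b k * (\<Sum>i\<in>{k..p-k}. c i))"
proof -
  have "(\<Sum>k\<le>p div 2. dl b k * (\<Sum>i\<in>{k..p-k}. c i))
      = (\<Sum>k\<le>p div 2. \<Sum>i\<le>p. (if k \<le> min i (p-i) then dl b k else 0) * c i)"
  proof (rule sum.cong)
    fix k assume "k \<in> {..p div 2}"
    have "{k..p-k} \<subseteq> {..p}" by auto
    then have "(\<Sum>i\<in>{k..p-k}. c i) = (\<Sum>i\<le>p. if i \<in> {k..p-k} then c i else 0)"
      by (simp add: sum.inter_restrict[symmetric] Int_absorb1 del: atLeastAtMost_iff)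
    also have "\<dots> = (\<Sum>i\<le>p. if k \<le> min i (p-i) then c i else 0)"
      by (rule sum.cong) auto
    finally show "dl b k * (\<Sum>i\<in>{k..p-k}. c i) = (\<Sum>i\<le>p. (if k \<le> min i (p-i) then dl b k else 0) * c i)"
      by (simp add: sum_distrib_left, intro sum.cong, auto)
  qed simp
  also have "\<dots> = (\<Sum>i\<le>p. (\<Sum>k\<le>p div 2. if k \<le> min i (p-i) then dl b k else 0) * c i)"
    by (subst sum.swap) (simp add: sum_distrib_right)
  also have "\<dots> = (\<Sum>i\<le>p. b i * c i)"
  proof (rule sum.cong)
    fix i assume i: "i \<in> {..p}"
    define m where "m = min i (p-i)"
    have "m \<le> p div 2" unfolding m_def by linarith
    then have "{k\<in>{..p div 2}. k \<le> m} = {..m}" by auto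
    then have "(\<Sum>k\<le>p div 2. if k \<le> m then dl b k else 0) = (\<Sum>k\<le>m. dl b k)"
      by (simp add: sum.inter_filter[symmetric])
    also have "\<dots> = b m" by (rule dl_tel)
    also have "\<dots> = b i" using app_sym[OF assms, of i] i unfolding m_def by (auto simp: min_def)
    finally show "(\<Sum>k\<le>p div 2. if k \<le> min i (p-i) then dl b k else 0) * c i = b i * c i"
      unfolding m_def by simp
  qed simp
  finally show ?thesis by simp
qed

lemma interval_sum:
  fixes k p :: nat
  assumes "k \<le> p div 2"
  shows "(\<Sum>i\<in>{k..p-k}. c i) = (\<Sum>j<p-2*k+1. c (k+j))"
proof -
  have "{k..p-k} = (\<lambda>j. k+j) ` {..<p-2*k+1}"
  proof
    show "{k..p-k} \<subseteq> (\<lambda>j. k+j) ` {..<p-2*k+1}"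
    proof
      fix x assume "x \<in> {k..p-k}"
      then have "x = k + (x-k)" "x - k < p-2*k+1" using assms by auto
      then show "x \<in> (\<lambda>j. k+j) ` {..<p-2*k+1}" by blast
    qed
  qed (use assms in auto)
  then show ?thesis by (simp add: sum.reindex)
qed

theorem lemma3p4:
  fixes a b :: "nat \<Rightarrow> real" and p q u v :: nat
  assumes "q > p + 1"
    and "appropriate q a" and "appropriate p b"
    and "u < v" and "u + v \<le> q - p"
  shows "(\<Sum>i\<le>p. a (i + u) * b i) \<le> (\<Sum>i\<le>p. a (i + v) * b i)"
proof -
  have L: "(\<Sum>i\<le>p. a (i + w) * b i) = (\<Sum>k\<le>p div 2. dl b k * (\<Sum>j<p-2*k+1. a ((k+w)+j)))" for w
  proof -
    have "(\<Sum>i\<le>p. a (i + w) * b i) = (\<Sum>i\<le>p. b i * a (i + w))" by (simp add: mult.commute)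
    also have "\<dots> = (\<Sum>k\<le>p div 2. dl b k * (\<Sum>i\<in>{k..p-k}. a (i+w)))"
      by (rule decomp[OF assms(3)])
    also have "\<dots> = (\<Sum>k\<le>p div 2. dl b k * (\<Sum>j<p-2*k+1. a ((k+w)+j)))"
      by (rule sum.cong) (auto simp: interval_sum add_ac)
    finally show ?thesis .
  qed
  show ?thesis unfolding L
  proof (rule sum_mono)
    fix k assume k: "k \<in> {..p div 2}"
    have "(\<Sum>j<p-2*k+1. a ((k+u)+j)) \<le> (\<Sum>j<p-2*k+1. a ((k+v)+j))"
      by (rule win[OF assms(2)]) (use assms k in auto)
    then show "dl b k * (\<Sum>j<p-2*k+1. a ((k+u)+j)) \<le> dl b k * (\<Sum>j<p-2*k+1. a ((k+v)+j))"
      using dl_nonneg[OF assms(3)] k by (simp add: mult_left_mono)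
  qed
qed

end
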